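(* Let $M$ be a matroid flock on a finite set $E$. There is a unique function $g:\mathbb{Z}^E\to\mathbb{Z}$ such that (1) $g(0)=0$, and (2) $g(\alpha+e_I)=g(\alpha)+r_\alpha(I)$ for all $\alpha\in\mathbb{Z}^E$ and $I\subseteq E$.
   Context: $e_I:=\sum_{i\in I}e_i$ ($e_i$ unit vectors), $\mathbf{1}:=e_E$. A matroid flock of rank $d$ on $E$ is a map $M$ assigning to each $\alpha\in\mathbb{Z}^E$ a matroid $M_\alpha$ on $E$ of rank $d$ with (MF1) $M_\alpha/i=M_{\alpha+e_i}\setminus i$ for all $\alpha$, $i\in E$ (contraction, deletion); and (MF2) $M_\alpha=M_{\alpha+\mathbf{1}}$ for all $\alpha$. $r_\alpha$ denotes the rank function of $M_\alpha$. *)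

theory Defs
  imports Main
begin

definition matroid_on :: "'a set \<Rightarrow> ('a set \<Rightarrow> bool) \<Rightarrow> bool" where
  "matroid_on E indep \<longleftrightarrow>
     finite E \<and>
     (\<forall>X. indep X \<longrightarrow> X \<subseteq> E) \<and>
     indep {} \<and>
     (\<forall>X Y. indep Y \<and> X \<subseteq> Y \<longrightarrow> indep X) \<and>
     (\<forall>X Y. indep X \<and> indep Y \<and> card X < card Y \<longrightarrow> (\<exists>y\<in>Y - X. indep (insert y X)))"

definition mrank :: "('a set \<Rightarrow> bool) \<Rightarrow> 'a set \<Rightarrow> nat" where
  "mrank indep X = Max (card ` {Y. Y \<subseteq> X \<and> indep Y})"

definition mdelete :: "('a set \<Rightarrow> bool) \<Rightarrow> 'a \<Rightarrow> 'a set \<Rightarrow> bool" where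
  "mdelete indep i = (\<lambda>X. indep X \<and> i \<notin> X)"

definition mcontract :: "('a set \<Rightarrow> bool) \<Rightarrow> 'a \<Rightarrow> 'a set \<Rightarrow> bool" where
  "mcontract indep i = (\<lambda>X. i \<notin> X \<and> (if indep {i} then indep (insert i X) else indep X))"

text \<open>Indicator vector e_I in Z^E (E is the finite type 'a).\<close>
definition evec :: "'a set \<Rightarrow> 'a \<Rightarrow> int" where
  "evec I = (\<lambda>x. if x \<in> I then 1 else 0)"

definition matroid_flock :: "(('a::finite \<Rightarrow> int) \<Rightarrow> 'a set \<Rightarrow> bool) \<Rightarrow> nat \<Rightarrow> bool" where
  "matroid_flock M d \<longleftrightarrow>
     (\<forall>\<alpha>. matroid_on UNIV (M \<alpha>) \<and> mrank (M \<alpha>) UNIV = d) \<and>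
     (\<forall>\<alpha> i. mcontract (M \<alpha>) i = mdelete (M (\<lambda>x. \<alpha> x + evec {i} x)) i) \<and>
     (\<forall>\<alpha>. M \<alpha> = M (\<lambda>x. \<alpha> x + 1))"

end

theory Submission
  imports Defs
begin


lemma rank_props:
  fixes N :: "'a::finite set \<Rightarrow> bool"
  assumes "N {}"
  shows "\<exists>Y. Y \<subseteq> X \<and> N Y \<and> card Y = mrank N X"
    and "\<And>Y. Y \<subseteq> X \<Longrightarrow> N Y \<Longrightarrow> card Y \<le> mrank N X"
proof -
  let ?S = "card ` {Y. Y \<subseteq> X \<and> N Y}"
  have f: "finite ?S" by simp
  have ne: "?S \<noteq> {}" using assms by auto
  show "\<exists>Y. Y \<subseteq> X \<and> N Y \<and> card Y = mrank N X"
    using Max_in[OF f ne] unfolding mrank_def by auto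
  show "\<And>Y. Y \<subseteq> X \<Longrightarrow> N Y \<Longrightarrow> card Y \<le> mrank N X"
    unfolding mrank_def using f by (auto intro!: Max_ge)
qed

lemma rank_eqI:
  fixes N :: "'a::finite set \<Rightarrow> bool"
  assumes "N {}" "Y \<subseteq> X" "N Y" "\<And>Z. Z \<subseteq> X \<Longrightarrow> N Z \<Longrightarrow> card Z \<le> card Y"
  shows "mrank N X = card Y"
proof -
  obtain W where "W \<subseteq> X" "N W" "card W = mrank N X"
    using rank_props(1)[where N=N and X=X, OF assms(1)] by blast
  then show ?thesis
    using rank_props(2)[where N=N and X=X, OF assms(1)] assms(2-4) by (metis le_antisym)
qed

lemma augment:
  fixes N :: "'a::finite set \<Rightarrow> bool"
  assumes m: "matroid_on UNIV N"
  shows "N A \<Longrightarrow> N B \<Longrightarrow> card A \<le> card B \<Longrightarrow>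
    \<exists>Z. A \<subseteq> Z \<and> Z \<subseteq> A \<union> B \<and> N Z \<and> card Z = card B"
proof (induction "card B - card A" arbitrary: A)
  case 0
  then show ?case by (intro exI[of _ A]) auto
next
  case (Suc n)
  then have "card A < card B" by simp
  moreover have ax: "\<forall>X Y. N X \<and> N Y \<and> card X < card Y \<longrightarrow> (\<exists>y\<in>Y - X. N (insert y X))"
    using m unfolding matroid_on_def by (elim conjE)
  ultimately obtain y where y: "y \<in> B - A" "N (insert y A)"
    using Suc.prems by blast
  have c: "card (insert y A) = card A + 1" using y by simp
  have "n = card B - card (insert y A)" using c Suc.hyps(2) by simp
  moreover have "card (insert y A) \<le> card B" using c \<open>card A < card B\<close> by simp
  ultimately obtain Z where "insert y A \<subseteq> Z" "Z \<subseteq> insert y A \<union> B" "N Z" "card Z = card B"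
    using Suc.hyps(1)[of "insert y A"] y(2) Suc.prems(2) by blast
  then show ?case using y by (intro exI[of _ Z]) auto
qed

lemma rank_delete:
  fixes N :: "'a::finite set \<Rightarrow> bool"
  assumes "i \<notin> X"
  shows "mrank (mdelete N i) X = mrank N X"
proof -
  have "{Y. Y \<subseteq> X \<and> mdelete N i Y} = {Y. Y \<subseteq> X \<and> N Y}"
    using assms unfolding mdelete_def by auto
  then show ?thesis unfolding mrank_def by simp
qed

lemma rank_contract:
  fixes N :: "'a::finite set \<Rightarrow> bool"
  assumes m: "matroid_on UNIV N" and i: "i \<notin> X"
  shows "mrank (mcontract N i) X + mrank N {i} = mrank N (insert i X)"
proof (cases "N {i}")
  case True
  have e: "N {}" using m unfolding matroid_on_def by blast
  have ce: "mcontract N i {}" using True unfolding mcontract_def by simp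
  have r1: "mrank N {i} = 1"
  proof -
    have "mrank N {i} = card {i}"
      by (rule rank_eqI[OF e _ True]) (auto dest!: subset_singletonD)
    then show ?thesis by simp
  qed
  obtain B where B: "B \<subseteq> insert i X" "N B" "card B = mrank N (insert i X)"
    using rank_props(1)[where N=N, OF e] by blast
  have "card {i} \<le> card B"
    using rank_props(2)[where N=N, OF e, of "{i}" "insert i X"] True B by simp
  then obtain Z where Z: "{i} \<subseteq> Z" "Z \<subseteq> {i} \<union> B" "N Z" "card Z = card B"
    using augment[OF m True B(2)] by blast
  let ?Y = "Z - {i}"
  have Y: "?Y \<subseteq> X" "mcontract N i ?Y" "card ?Y = card B - 1"
    using Z B i unfolding mcontract_def by (auto simp: True insert_absorb)
  have "mrank (mcontract N i) X = card ?Y"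
  proof (rule rank_eqI[OF ce Y(1,2)])
    fix W assume W: "W \<subseteq> X" "mcontract N i W"
    then have "N (insert i W)" "i \<notin> W" unfolding mcontract_def using True by auto
    then have "card (insert i W) \<le> card B"
      using rank_props(2)[where N=N, OF e, of "insert i W" "insert i X"] W B by auto
    then show "card W \<le> card ?Y" using Y \<open>i \<notin> W\<close> by simp
  qed
  moreover have "card B \<ge> 1" using \<open>card {i} \<le> card B\<close> by simp
  ultimately show ?thesis using Y r1 B by simp
next
  case False
  have e: "N {}" using m unfolding matroid_on_def by blast
  have sub: "\<And>Y. N Y \<Longrightarrow> i \<notin> Y"
  proof -
    fix Y assume "N Y"
    show "i \<notin> Y"
    proof
      assume "i \<in> Y"
      then have "{i} \<subseteq> Y" by simp
      then show False using m \<open>N Y\<close> False unfolding matroid_on_def by blast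
    qed
  qed
  have a: "{Y. Y \<subseteq> X \<and> mcontract N i Y} = {Y. Y \<subseteq> X \<and> N Y}"
    using i False unfolding mcontract_def by auto
  have b: "{Y. Y \<subseteq> insert i X \<and> N Y} = {Y. Y \<subseteq> X \<and> N Y}"
    using sub by blast
  have c: "{Y. Y \<subseteq> {i} \<and> N Y} = {{}}"
    using sub e by blast
  show ?thesis unfolding mrank_def a b c by simp
qed



definition sh :: "('a \<Rightarrow> int) \<Rightarrow> 'a set \<Rightarrow> 'a \<Rightarrow> int" where
  "sh a I = (\<lambda>x. a x + evec I x)"

definition pl :: "('a \<Rightarrow> int) \<Rightarrow> ('a \<Rightarrow> nat) \<Rightarrow> 'a \<Rightarrow> int" where
  "pl a b = (\<lambda>x. a x + int (b x))"

lemma flock_L: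
  fixes M :: "('a::finite \<Rightarrow> int) \<Rightarrow> 'a set \<Rightarrow> bool"
  assumes f: "matroid_flock M d" and i: "i \<notin> X"
  shows "mrank (M (sh a {i})) X + mrank (M a) {i} = mrank (M a) (insert i X)"
proof -
  have m: "matroid_on UNIV (M a)" using f unfolding matroid_flock_def by blast
  have c: "mcontract (M a) i = mdelete (M (sh a {i})) i"
    using f unfolding matroid_flock_def sh_def by blast
  show ?thesis using rank_contract[OF m i] rank_delete[OF i, of "M (sh a {i})"] c by simp
qed

lemma sum_dec:
  fixes b :: "'a::finite \<Rightarrow> nat"
  assumes "b j > 0"
  shows "sum (b(j := b j - 1)) UNIV < sum b UNIV"
proof -
  have "sum (b(j := b j - 1)) UNIV = sum b UNIV - 1"
    using assms by (simp add: sum.remove[of UNIV j])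
  moreover have "sum b UNIV \<ge> b j" by (rule member_le_sum) auto
  ultimately show ?thesis using assms by simp
qed

function G :: "(('a::finite \<Rightarrow> int) \<Rightarrow> 'a set \<Rightarrow> bool) \<Rightarrow> ('a \<Rightarrow> int) \<Rightarrow> ('a \<Rightarrow> nat) \<Rightarrow> int" where
  "G M a b = (if b = (\<lambda>_. 0) then 0 else
     int (mrank (M a) {SOME j. b j > 0}) +
       G M (sh a {SOME j. b j > 0}) (b((SOME j. b j > 0) := b (SOME j. b j > 0) - 1)))"
  by auto
termination
proof (relation "measure (\<lambda>(M, a, b). sum b UNIV)")
  show "wf (measure (\<lambda>(M, a, b). sum b UNIV))" by simp
  fix M :: "('a::finite \<Rightarrow> int) \<Rightarrow> 'a set \<Rightarrow> bool" and a and b :: "'a \<Rightarrow> nat"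
  assume "b \<noteq> (\<lambda>_. 0)"
  then have "\<exists>j. b j > 0" by auto
  then have "b (SOME j. b j > 0) > 0" by (rule someI_ex)
  then show "((M, sh a {SOME j. b j > 0}, b((SOME j. b j > 0) := b (SOME j. b j > 0) - 1)), M, a, b)
       \<in> measure (\<lambda>(M, a, b). sum b UNIV)" using sum_dec by simp
qed

declare G.simps[simp del]

lemma G0: "G M a (\<lambda>_. 0) = 0" by (simp add: G.simps)

lemma sh_comm: "sh (sh a {i}) {j} = sh (sh a {j}) {i}"
  unfolding sh_def evec_def by auto

lemma Gstep:
  fixes M :: "('a::finite \<Rightarrow> int) \<Rightarrow> 'a set \<Rightarrow> bool"
  assumes f: "matroid_flock M d"
  shows "b j > 0 \<Longrightarrow> G M a b = int (mrank (M a) {j}) + G M (sh a {j}) (b(j := b j - 1))"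
proof (induction "sum b UNIV" arbitrary: a b j rule: less_induct)
  case less
  define i where "i = (SOME j. b j > 0)"
  have bi: "b i > 0" unfolding i_def using less.prems by (rule someI)
  have nz: "b \<noteq> (\<lambda>_. 0)" using less.prems by auto
  have Gb: "G M a b = int (mrank (M a) {i}) + G M (sh a {i}) (b(i := b i - 1))"
    by (subst G.simps) (simp add: nz i_def[symmetric])
  show ?case
  proof (cases "i = j")
    case True then show ?thesis using Gb by simp
  next
    case False
    let ?bi = "b(i := b i - 1)" and ?bj = "b(j := b j - 1)"
    have 1: "G M (sh a {i}) ?bi = int (mrank (M (sh a {i})) {j}) + G M (sh (sh a {i}) {j}) (?bi(j := ?bi j - 1))"
      using less.hyps[of ?bi j "sh a {i}"] sum_dec[of b i, OF bi] less.prems False by simp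
    have 2: "G M (sh a {j}) ?bj = int (mrank (M (sh a {j})) {i}) + G M (sh (sh a {j}) {i}) (?bj(i := ?bj i - 1))"
      using less.hyps[of ?bj i "sh a {j}"] sum_dec[of b j, OF less.prems] bi False by simp
    have e: "?bi(j := ?bi j - 1) = ?bj(i := ?bj i - 1)" using False by (auto simp: fun_eq_iff)
    have sq1: "mrank (M (sh a {i})) {j} + mrank (M a) {i} = mrank (M a) {i, j}"
      using flock_L[OF f, of i "{j}" a] False by simp
    have sq2: "mrank (M (sh a {j})) {i} + mrank (M a) {j} = mrank (M a) {i, j}"
      using flock_L[OF f, of j "{i}" a] False by (simp add: insert_commute)
    show ?thesis using Gb 1 2 e sq1 sq2 sh_comm[of a i j] by simp
  qed
qed



definition en :: "'a set \<Rightarrow> 'a \<Rightarrow> nat" where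
  "en I = (\<lambda>x. if x \<in> I then 1 else 0)"

lemma flock_m:
  fixes M :: "('a::finite \<Rightarrow> int) \<Rightarrow> 'a set \<Rightarrow> bool"
  assumes f: "matroid_flock M d"
  shows "matroid_on UNIV (M a)" "mrank (M a) UNIV = d"
  using f unfolding matroid_flock_def by blast+

lemma rank_empty:
  fixes N :: "'a::finite set \<Rightarrow> bool"
  assumes "matroid_on UNIV N"
  shows "mrank N {} = 0"
proof -
  have "N {}" using assms unfolding matroid_on_def by blast
  then have "mrank N {} = card ({}::'a set)" using rank_eqI[where N=N, of "{}" "{}"] by simp
  then show ?thesis by simp
qed

lemma Gset:
  fixes M :: "('a::finite \<Rightarrow> int) \<Rightarrow> 'a set \<Rightarrow> bool"
  assumes f: "matroid_flock M d"
  shows "G M a (\<lambda>x. b x + en I x) = int (mrank (M a) I) + G M (sh a I) b"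
proof -
  have "finite I" by simp
  then show ?thesis
  proof (induction I arbitrary: a rule: finite_induct)
    case empty
    have "sh a {} = a" unfolding sh_def evec_def by simp
    moreover have "(\<lambda>x. b x + en {} x) = b" unfolding en_def by simp
    ultimately show ?case using rank_empty[OF flock_m(1)[OF f]] by simp
  next
    case (insert i J)
    let ?b = "\<lambda>x. b x + en (insert i J) x"
    have bi: "?b i > 0" unfolding en_def by simp
    have e1: "?b(i := ?b i - 1) = (\<lambda>x. b x + en J x)"
      using insert.hyps(2) unfolding en_def by (auto simp: fun_eq_iff)
    have e2: "sh (sh a {i}) J = sh a (insert i J)"
      using insert.hyps(2) unfolding sh_def evec_def by (auto simp: fun_eq_iff)
    have L: "mrank (M (sh a {i})) J + mrank (M a) {i} = mrank (M a) (insert i J)"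
      using flock_L[OF f insert.hyps(2)] by simp
    have "G M a ?b = int (mrank (M a) {i}) + G M (sh a {i}) (?b(i := ?b i - 1))"
      using Gstep[OF f, where b="?b" and j=i, OF bi] by simp
    also have "\<dots> = int (mrank (M a) {i}) + (int (mrank (M (sh a {i})) J) + G M (sh (sh a {i}) J) b)"
      unfolding e1 insert.IH by simp
    also have "\<dots> = int (mrank (M a) (insert i J)) + G M (sh a (insert i J)) b"
      using e2 L by simp
    finally show ?case .
  qed
qed

lemma Gconcat:
  fixes M :: "('a::finite \<Rightarrow> int) \<Rightarrow> 'a set \<Rightarrow> bool"
  assumes f: "matroid_flock M d"
  shows "G M a (\<lambda>x. b x + c x) = G M a b + G M (pl a b) c"
proof (induction "sum b UNIV" arbitrary: a b rule: less_induct)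
  case less
  show ?case
  proof (cases "b = (\<lambda>_. 0)")
    case True
    then show ?thesis by (simp add: G0 pl_def)
  next
    case False
    then obtain j where j: "b j > 0" by auto
    let ?bj = "b(j := b j - 1)"
    have 1: "G M a b = int (mrank (M a) {j}) + G M (sh a {j}) ?bj" using Gstep[OF f, where b=b and j=j, OF j] .
    have j2: "(\<lambda>x. b x + c x) j > 0" using j by simp
    have e: "(\<lambda>x. b x + c x)(j := (\<lambda>x. b x + c x) j - 1) = (\<lambda>x. ?bj x + c x)"
      using j by (auto simp: fun_eq_iff)
    have 2: "G M a (\<lambda>x. b x + c x) = int (mrank (M a) {j}) + G M (sh a {j}) (\<lambda>x. ?bj x + c x)"
      using Gstep[OF f, where b="\<lambda>x. b x + c x" and j=j, OF j2] e by simp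
    have 3: "G M (sh a {j}) (\<lambda>x. ?bj x + c x) = G M (sh a {j}) ?bj + G M (pl (sh a {j}) ?bj) c"
      using less.hyps[of ?bj "sh a {j}"] sum_dec[of b j, OF j] by simp
    have e4: "pl (sh a {j}) ?bj = pl a b"
      using j unfolding pl_def sh_def evec_def by (auto simp: fun_eq_iff)
    show ?thesis using 1 2 3 e4 by simp
  qed
qed

lemma Gconst:
  fixes M :: "('a::finite \<Rightarrow> int) \<Rightarrow> 'a set \<Rightarrow> bool"
  assumes f: "matroid_flock M d"
  shows "G M a (\<lambda>_. k) = int k * int d"
proof (induction k arbitrary: a)
  case 0
  then show ?case using G0 by simp
next
  case (Suc k)
  have "G M a (\<lambda>_. Suc k) = G M a (\<lambda>x. k + en UNIV x)" unfolding en_def by simp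
  then have "G M a (\<lambda>_. Suc k) = int (mrank (M a) UNIV) + G M (sh a UNIV) (\<lambda>_. k)"
    using Gset[OF f, of a "\<lambda>_. k" UNIV] by simp
  then show ?case using Suc.IH flock_m(2)[OF f] by (simp add: algebra_simps)
qed

definition gdef :: "(('a::finite \<Rightarrow> int) \<Rightarrow> 'a set \<Rightarrow> bool) \<Rightarrow> nat \<Rightarrow> ('a \<Rightarrow> int) \<Rightarrow> int" where
  "gdef M d \<alpha> = Min (range \<alpha>) * int d + G M (\<lambda>_. Min (range \<alpha>)) (\<lambda>x. nat (\<alpha> x - Min (range \<alpha>)))"

lemma min_le: "Min (range (\<alpha> :: 'a::finite \<Rightarrow> int)) \<le> \<alpha> x"
  by (rule Min_le) auto

lemma min_in: "\<exists>x. Min (range (\<alpha> :: 'a::finite \<Rightarrow> int)) = \<alpha> x"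
proof -
  have "Min (range \<alpha>) \<in> range \<alpha>" by (rule Min_in) auto
  then show ?thesis by (metis rangeE)
qed

lemma gbase:
  fixes M :: "('a::finite \<Rightarrow> int) \<Rightarrow> 'a set \<Rightarrow> bool"
  assumes f: "matroid_flock M d" and c: "\<And>x. c \<le> \<alpha> x"
  shows "gdef M d \<alpha> = c * int d + G M (\<lambda>_. c) (\<lambda>x. nat (\<alpha> x - c))"
proof -
  define m where "m = Min (range \<alpha>)"
  have mc: "c \<le> m" using min_in[of \<alpha>] c unfolding m_def by metis
  have ma: "\<And>x. m \<le> \<alpha> x" unfolding m_def by (rule min_le)
  have e: "(\<lambda>x. nat (\<alpha> x - c)) = (\<lambda>x. (\<lambda>_. nat (m - c)) x + (\<lambda>x. nat (\<alpha> x - m)) x)"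
  proof (rule ext)
    fix x show "nat (\<alpha> x - c) = nat (m - c) + nat (\<alpha> x - m)" using mc ma[of x] by arith
  qed
  have p: "pl (\<lambda>_. c) (\<lambda>_. nat (m - c)) = (\<lambda>_. m)" using mc unfolding pl_def by auto
  have "G M (\<lambda>_. c) (\<lambda>x. nat (\<alpha> x - c)) = int (nat (m - c)) * int d + G M (\<lambda>_. m) (\<lambda>x. nat (\<alpha> x - m))"
    unfolding e Gconcat[OF f] p Gconst[OF f] ..
  then show ?thesis unfolding gdef_def m_def[symmetric] using mc by (simp add: algebra_simps)
qed

lemma gprop:
  fixes M :: "('a::finite \<Rightarrow> int) \<Rightarrow> 'a set \<Rightarrow> bool"
  assumes f: "matroid_flock M d"
  shows "gdef M d (\<lambda>x. \<alpha> x + evec I x) = gdef M d \<alpha> + int (mrank (M \<alpha>) I)"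
proof -
  define c where "c = Min (range \<alpha>)"
  have ca: "\<And>x. c \<le> \<alpha> x" unfolding c_def by (rule min_le)
  have cb: "\<And>x. c \<le> \<alpha> x + evec I x" using ca unfolding evec_def
    by (smt (verit))
  define \<beta> where "\<beta> = (\<lambda>x. nat (\<alpha> x - c))"
  have e: "(\<lambda>x. nat (\<alpha> x + evec I x - c)) = (\<lambda>x. \<beta> x + en I x)"
  proof (rule ext)
    fix x show "nat (\<alpha> x + evec I x - c) = \<beta> x + en I x"
      using ca[of x] unfolding \<beta>_def evec_def en_def by (cases "x \<in> I"; simp; arith)
  qed
  have p: "pl (\<lambda>_. c) \<beta> = \<alpha>" using ca unfolding pl_def \<beta>_def by (auto simp: fun_eq_iff)
  have z: "G M \<alpha> (\<lambda>x. (\<lambda>_. 0) x + en I x) = int (mrank (M \<alpha>) I)"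
    using Gset[OF f, of \<alpha> "\<lambda>_. 0" I] G0 by simp
  have "gdef M d (\<lambda>x. \<alpha> x + evec I x) = c * int d + G M (\<lambda>_. c) (\<lambda>x. \<beta> x + en I x)"
    using gbase[OF f, of c "\<lambda>x. \<alpha> x + evec I x"] cb e by simp
  also have "\<dots> = c * int d + G M (\<lambda>_. c) \<beta> + int (mrank (M \<alpha>) I)"
    using Gconcat[OF f, of "\<lambda>_. c" \<beta> "en I"] p z by simp
  also have "c * int d + G M (\<lambda>_. c) \<beta> = gdef M d \<alpha>"
    using gbase[OF f ca] unfolding \<beta>_def by simp
  finally show ?thesis .
qed

lemma gzero:
  fixes M :: "('a::finite \<Rightarrow> int) \<Rightarrow> 'a set \<Rightarrow> bool"
  assumes f: "matroid_flock M d"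
  shows "gdef M d (\<lambda>_. 0) = 0"
  using gbase[OF f, of 0 "\<lambda>_. 0"] G0 by simp

lemma hpl:
  fixes h :: "('a::finite \<Rightarrow> int) \<Rightarrow> int"
  assumes H: "\<And>\<alpha> I. h (\<lambda>x. \<alpha> x + evec I x) = h \<alpha>"
  shows "h (pl a b) = h a"
proof (induction "sum b UNIV" arbitrary: b rule: less_induct)
  case less
  show ?case
  proof (cases "b = (\<lambda>_. 0)")
    case True then show ?thesis by (simp add: pl_def)
  next
    case False
    then obtain j where j: "b j > 0" by auto
    let ?bj = "b(j := b j - 1)"
    have "pl a b = (\<lambda>x. pl a ?bj x + evec {j} x)"
      using j unfolding pl_def evec_def by (auto simp: fun_eq_iff)
    then have "h (pl a b) = h (pl a ?bj)" using H by simp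
    then show ?thesis using less.hyps[of ?bj] sum_dec[of b j, OF j] by simp
  qed
qed

lemma hconst:
  fixes h :: "('a::finite \<Rightarrow> int) \<Rightarrow> int"
  assumes H: "\<And>\<alpha> I. h (\<lambda>x. \<alpha> x + evec I x) = h \<alpha>"
  shows "h (\<lambda>_. k) = h (\<lambda>_. 0)"
proof -
  have s: "\<And>i::int. h (\<lambda>_. i + 1) = h (\<lambda>_. i)"
  proof -
    fix i :: int
    have "(\<lambda>_::'a. i + 1) = (\<lambda>x. (\<lambda>_. i) x + evec UNIV x)" unfolding evec_def by simp
    then show "h (\<lambda>_. i + 1) = h (\<lambda>_. i)" using H by simp
  qed
  show ?thesis
  proof (induction k rule: int_induct[where k = 0])
    case base then show ?case by simp
  next
    case (step1 i) then show ?case using s[of i] by simp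
  next
    case (step2 i) then show ?case using s[of "i - 1"] by simp
  qed
qed

lemma huniq:
  fixes h :: "('a::finite \<Rightarrow> int) \<Rightarrow> int"
  assumes H: "\<And>\<alpha> I. h (\<lambda>x. \<alpha> x + evec I x) = h \<alpha>"
  shows "h \<alpha> = h (\<lambda>_. 0)"
proof -
  define m where "m = Min (range \<alpha>)"
  have ma: "\<And>x. m \<le> \<alpha> x" unfolding m_def by (rule min_le)
  have "\<alpha> = pl (\<lambda>_. m) (\<lambda>x. nat (\<alpha> x - m))" using ma unfolding pl_def by (auto simp: fun_eq_iff)
  then have "h \<alpha> = h (\<lambda>_. m)" using hpl[OF H] by metis
  then show ?thesis using hconst[OF H] by simp
qed

theorem mainTheorem11:
  fixes M :: "('a::finite \<Rightarrow> int) \<Rightarrow> 'a set \<Rightarrow> bool" and d :: nat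
  assumes "matroid_flock M d"
  shows "\<exists>!g :: ('a \<Rightarrow> int) \<Rightarrow> int.
           g (\<lambda>_. 0) = 0 \<and>
           (\<forall>\<alpha> I. g (\<lambda>x. \<alpha> x + evec I x) = g \<alpha> + int (mrank (M \<alpha>) I))"
proof (rule ex1I[of _ "gdef M d"])
  show "gdef M d (\<lambda>_. 0) = 0 \<and>
    (\<forall>\<alpha> I. gdef M d (\<lambda>x. \<alpha> x + evec I x) = gdef M d \<alpha> + int (mrank (M \<alpha>) I))"
    using gzero[OF assms] gprop[OF assms] by blast
next
  fix g :: "('a \<Rightarrow> int) \<Rightarrow> int"
  assume g: "g (\<lambda>_. 0) = 0 \<and>
           (\<forall>\<alpha> I. g (\<lambda>x. \<alpha> x + evec I x) = g \<alpha> + int (mrank (M \<alpha>) I))"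
  define h where "h = (\<lambda>\<alpha>. g \<alpha> - gdef M d \<alpha>)"
  have H: "\<And>\<alpha> I. h (\<lambda>x. \<alpha> x + evec I x) = h \<alpha>"
    unfolding h_def using g gprop[OF assms] by simp
  have "\<And>\<alpha>. h \<alpha> = 0" using huniq[OF H] g gzero[OF assms] unfolding h_def by simp
  then show "g = gdef M d" unfolding h_def by (auto simp: fun_eq_iff)
qed

end
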